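(* For every integer $t$, \begin{align*} \sum_{n=1}^\infty(-1)^{n-1}\binom{2n}{n}\frac{O_n}{8^n}L_{n+t}&=\frac{\sqrt2}{2\sqrt{\alpha+2}}\left(\bigl(\alpha^{t+1}-L_{t-1}\bigr)\ln\Bigl(\frac{\sqrt5}{2}\Bigr)+\bigl(\alpha^{t-2}+L_{t-1}\bigr)\ln\alpha\right),\\ \sum_{n=1}^\infty(-1)^{n-1}\binom{2n}{n}\frac{O_n}{8^n}F_{n+t}&=\frac{\sqrt{10}}{10\sqrt{\alpha+2}}\left(\bigl(\alpha^{t-2}+L_{t-1}\bigr)\ln\Bigl(\frac{\sqrt5}{2}\Bigr)+\bigl(\alpha^{t+1}-L_{t-1}\bigr)\ln\alpha\right), \end{align*} and, more generally, for every gibonacci sequence $G_j=G_j(a,b)$, \begin{align*} \sum_{n=1}^\infty(-1)^{n-1}\binom{2n}{n}\frac{O_n}{8^n}G_{n+t}&=\frac{\sqrt{10}}{10\sqrt{\alpha+2}}\Bigl(\bigl(\alpha^{t-3}(b\alpha+a)+G_t+G_{t-2}\bigr)\ln\Bigl(\frac{\sqrt5}{2}\Bigr)\\ &\qquad+\bigl(\alpha^t(b\alpha+a)-G_t-G_{t-2}\bigr)\ln\alpha\Bigr). \end{align*}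
   Context: $O_n=\sum_{j=1}^n\frac1{2j-1}$. $F_n$ and $L_n$ are the Fibonacci and Lucas numbers ($F_0=0,F_1=1$, $L_0=2,L_1=1$, $u_n=u_{n-1}+u_{n-2}$), extended to all integers by the recurrence. $\alpha=(1+\sqrt5)/2$, $\beta=-1/\alpha$. For numbers $a,b$ not both zero, the gibonacci sequence $G_j=G_j(a,b)$ is defined by $G_0=a$, $G_1=b$, $G_j=G_{j-1}+G_{j-2}$, extended to negative indices by $G_{-j}=G_{-(j-2)}-G_{-(j-1)}$; equivalently $G_j=\frac{(b-a\beta)\alpha^j+(a\alpha-b)\beta^j}{\alpha-\beta}$. *)

theory Defs
  imports Complex_Main
begin

fun gib_nat :: "real \<Rightarrow> real \<Rightarrow> nat \<Rightarrow> real" where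
  "gib_nat a b 0 = a"
| "gib_nat a b (Suc 0) = b"
| "gib_nat a b (Suc (Suc n)) = gib_nat a b (Suc n) + gib_nat a b n"

text \<open>gib_neg a b j = G_{-j}, via G_{-j} = G_{-(j-2)} - G_{-(j-1)}.\<close>
fun gib_neg :: "real \<Rightarrow> real \<Rightarrow> nat \<Rightarrow> real" where
  "gib_neg a b 0 = a"
| "gib_neg a b (Suc 0) = b - a"
| "gib_neg a b (Suc (Suc n)) = gib_neg a b n - gib_neg a b (Suc n)"

definition gib :: "real \<Rightarrow> real \<Rightarrow> int \<Rightarrow> real" where
  "gib a b t = (if t \<ge> 0 then gib_nat a b (nat t) else gib_neg a b (nat (- t)))"

definition fibZ :: "int \<Rightarrow> real" where "fibZ t = gib 0 1 t"
definition lucZ :: "int \<Rightarrow> real" where "lucZ t = gib 2 1 t"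

definition goldenA :: real where "goldenA = (1 + sqrt 5) / 2"

definition oddH :: "nat \<Rightarrow> real" where
  "oddH n = (\<Sum>j=1..n. 1 / (2 * real j - 1))"

definition cterm :: "nat \<Rightarrow> real" where
  "cterm n = (-1) ^ (n - 1) * real ((2 * n) choose n) * oddH n / 8 ^ n"

end

theory Submission
  imports Defs "HOL-Analysis.Analysis"
begin

lemma cb_rec_nat: "Suc k * ((2*Suc k) choose Suc k) = (4*k+2) * ((2*k) choose k)"
proof -
  have e1: "Suc k * (Suc (Suc (2*k)) choose Suc k) = Suc (Suc (2*k)) * (Suc (2*k) choose k)"
    by (rule Suc_times_binomial)
  have e2: "Suc k * (Suc (2*k) choose Suc k) = Suc (2*k) * ((2*k) choose k)"
    by (rule Suc_times_binomial)
  have e3: "(Suc (2*k) choose Suc k) = (Suc (2*k) choose k)"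
    using binomial_symmetric[of "Suc k" "Suc (2*k)"] by (simp del: binomial_Suc_Suc)
  have "Suc k * (Suc k * ((2*Suc k) choose Suc k)) = Suc k * ((4*k+2) * ((2*k) choose k))"
  proof -
    have "Suc k * (Suc k * ((2*Suc k) choose Suc k)) = Suc k * (Suc (Suc (2*k)) * (Suc (2*k) choose k))"
      using e1 by (simp del: binomial_Suc_Suc add: numeral_eq_Suc)
    also have "\<dots> = Suc (Suc (2*k)) * (Suc k * (Suc (2*k) choose Suc k))" using e3 by (simp del: binomial_Suc_Suc)
    also have "\<dots> = Suc (Suc (2*k)) * (Suc (2*k) * ((2*k) choose k))" using e2 by (simp del: binomial_Suc_Suc)
    also have "\<dots> = Suc k * ((4*k+2) * ((2*k) choose k))" by (simp del: binomial_Suc_Suc add: algebra_simps)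
    finally show ?thesis .
  qed
  then show ?thesis by (metis Suc_neq_Zero mult_left_cancel)
qed

lemma cb_rec: "real (Suc k) * real ((2*Suc k) choose Suc k) = (4*real k + 2) * real ((2*k) choose k)"
proof -
  have "real (Suc k * ((2*Suc k) choose Suc k)) = real ((4*k+2) * ((2*k) choose k))"
    using cb_rec_nat by metis
  then show ?thesis by (simp only: of_nat_mult of_nat_add of_nat_numeral)
qed

lemma cb_gchoose: "real ((2*k) choose k) = ((-1/2::real) gchoose k) * (-4)^k"
proof (induction k)
  case 0 then show ?case by simp
next
  case (Suc k)
  have g: "real (Suc k) * ((-1/2::real) gchoose Suc k) = (-1/2 - real k) * ((-1/2::real) gchoose k)"
    using gbinomial_absorption[of k "-1/2::real"] gbinomial_absorb_comp[of "-1/2::real" k] by simp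
  let ?G0 = "(-1/2::real) gchoose k" and ?G1 = "(-1/2::real) gchoose Suc k"
  have "real (Suc k) * (?G1 * (-4)^Suc k) = (real (Suc k) * ?G1) * (-4) * (-4)^k"
    by (simp only: power_Suc mult_ac)
  also have "\<dots> = (-1/2 - real k) * ?G0 * (-4) * (-4)^k" by (simp only: g)
  also have "\<dots> = (4*real k + 2) * (?G0 * (-4)^k)" by (simp add: algebra_simps)
  also have "\<dots> = (4*real k + 2) * real ((2*k) choose k)" by (simp only: Suc.IH)
  also have "\<dots> = real (Suc k) * real ((2*Suc k) choose Suc k)" by (simp only: cb_rec)
  finally have "real (Suc k) * real ((2*Suc k) choose Suc k) = real (Suc k) * (?G1 * (-4)^Suc k)" ..
  then show ?case by (metis mult_cancel_left of_nat_eq_0_iff Suc_neq_Zero)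
qed

lemma oddH_Suc: "oddH (Suc n) = oddH n + 1 / (2 * real n + 1)"
  unfolding oddH_def by simp

definition A :: "nat \<Rightarrow> real" where "A i = 4^i / (2 * real i)"
definition B :: "nat \<Rightarrow> real" where "B m = real ((2*m) choose m)"
definition cc :: "nat \<Rightarrow> real" where "cc n = B n * oddH n"
definition dd :: "nat \<Rightarrow> real" where "dd n = (\<Sum>i\<le>n. A i * B (n - i))"

lemma B_rec: "real (Suc k) * B (Suc k) = (4*real k + 2) * B k"
  unfolding B_def using cb_rec by simp

lemma cc_rec: "real (Suc n) * cc (Suc n) = (4*real n + 2) * cc n + 2 * B n"
proof -
  have h: "(4*real n + 2) * (1 / (2 * real n + 1)) = 2"
  proof -
    have p: "2 * real n + 1 \<noteq> 0" by (simp add: add_nonneg_eq_0_iff)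
    have "(4*real n + 2) = 2 * (2 * real n + 1)" by simp
    then show ?thesis using p by (simp add: divide_simps)
  qed
  have "real (Suc n) * cc (Suc n) = (real (Suc n) * B (Suc n)) * (oddH n + 1 / (2 * real n + 1))"
    unfolding cc_def oddH_Suc by (simp only: mult_ac)
  also have "\<dots> = (4*real n + 2) * B n * (oddH n + 1 / (2 * real n + 1))" by (simp only: B_rec)
  also have "\<dots> = (4*real n + 2) * (B n * oddH n) + B n * ((4*real n + 2) * (1 / (2 * real n + 1)))"
    by (simp only: algebra_simps)
  also have "\<dots> = (4*real n + 2) * cc n + 2 * B n" unfolding cc_def h by simp
  finally show ?thesis .
qed

lemma A0: "A 0 = 0" by (simp add: A_def)
lemma iA: "0 < i \<Longrightarrow> real i * A i = 4^i / 2" by (simp add: A_def)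
lemma iA': "real (Suc i) * A (Suc i) = 2 * 4^i" using iA[of "Suc i"] by (simp del: of_nat_Suc)

lemma split3: "(s::real) = x + y \<Longrightarrow> s * (a * b) = x * a * b + a * (y * b)"
  by (simp add: algebra_simps)

lemma dd_rec: "real (Suc n) * dd (Suc n) = (4*real n + 2) * dd n + 2 * B n"
proof -
  have t1: "real (Suc n) * (A i * B (Suc n - i)) = real i * A i * B (Suc n - i) + A i * (real (Suc n - i) * B (Suc n - i))"
    if "i \<in> {..Suc n}" for i
  proof -
    have "real (Suc n) = real i + real (Suc n - i)" using that by (simp add: of_nat_diff)
    then show ?thesis by (rule split3)
  qed
  have "real (Suc n) * dd (Suc n) = (\<Sum>i\<le>Suc n. real i * A i * B (Suc n - i))
        + (\<Sum>i\<le>Suc n. A i * (real (Suc n - i) * B (Suc n - i)))"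
    unfolding dd_def sum_distrib_left sum.distrib[symmetric]
    by (rule sum.cong[OF refl t1])
  also have "(\<Sum>i\<le>Suc n. real i * A i * B (Suc n - i)) = (\<Sum>i\<le>n. 2 * 4^i * B (n - i))"
    by (simp only: sum.atMost_Suc_shift iA' of_nat_0 mult_zero_left add_0 diff_Suc_Suc)
  also have "(\<Sum>i\<le>Suc n. A i * (real (Suc n - i) * B (Suc n - i)))
        = (\<Sum>i\<le>n. A i * ((4 * real (n - i) + 2) * B (n - i)))"
  proof -
    have hh: "A i * (real (Suc n - i) * B (Suc n - i)) = A i * ((4 * real (n - i) + 2) * B (n - i))"
      if "i \<in> {..n}" for i
      using that B_rec[of "n - i"] by (simp add: Suc_diff_le del: of_nat_Suc)
    have hs: "(\<Sum>i\<le>n. A i * (real (Suc n - i) * B (Suc n - i))) = (\<Sum>i\<le>n. A i * ((4 * real (n - i) + 2) * B (n - i)))"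
      by (rule sum.cong[OF refl hh])
    show ?thesis unfolding sum.atMost_Suc hs by simp
  qed
  also have "(\<Sum>i\<le>n. 2 * 4^i * B (n - i)) + (\<Sum>i\<le>n. A i * ((4 * real (n - i) + 2) * B (n - i)))
       = (\<Sum>i\<le>n. (4*real n + 2) * (A i * B (n - i)) + (if i = 0 then 2 * B (n - i) else 0))"
    unfolding sum.distrib[symmetric]
  proof (rule sum.cong[OF refl])
    fix i assume i: "i \<in> {..n}"
    show "2 * 4^i * B (n - i) + A i * ((4 * real (n - i) + 2) * B (n - i))
       = (4*real n + 2) * (A i * B (n - i)) + (if i = 0 then 2 * B (n - i) else 0)"
    proof (cases "i = 0")
      case True then show ?thesis by (simp add: A0)
    next
      case False
      have "A i * (4 * real (n - i) + 2) = A i * (4*real n + 2) - 4 * (real i * A i)"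
        using i by (simp add: of_nat_diff algebra_simps)
      also have "\<dots> = A i * (4*real n + 2) - 2 * 4^i" using False by (simp add: iA)
      finally have "A i * (4 * real (n - i) + 2) = A i * (4*real n + 2) - 2 * 4^i" .
      then have "A i * (4 * real (n - i) + 2) * B (n - i) = (A i * (4*real n + 2) - 2 * 4^i) * B (n - i)"
        by simp
      then show ?thesis using False by (simp add: algebra_simps)
    qed
  qed
  also have "\<dots> = (4*real n + 2) * dd n + 2 * B n"
    unfolding sum.distrib dd_def sum_distrib_left by simp
  finally show ?thesis .
qed

lemma cc_dd: "cc n = dd n"
proof (induction n)
  case 0 then show ?case by (simp add: cc_def dd_def oddH_def A_def)
next
  case (Suc n)
  have "real (Suc n) * cc (Suc n) = real (Suc n) * dd (Suc n)" using cc_rec dd_rec Suc.IH by simp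
  then show ?case by (simp del: of_nat_Suc)
qed



lemma B_le: "B k \<le> 4^k"
proof -
  have "(2*k) choose k \<le> 2^(2*k)" by (rule binomial_le_pow2)
  also have "(2::nat)^(2*k) = 4^k" by (simp add: power_mult)
  finally have "real ((2*k) choose k) \<le> real ((4::nat)^k)" by (simp only: of_nat_le_iff)
  then show ?thesis unfolding B_def by simp
qed

lemma B_nonneg: "0 \<le> B k" unfolding B_def by simp

lemma A_nonneg: "0 \<le> A k" unfolding A_def by simp

lemma A_le: "A k \<le> 4^k"
proof (cases "k = 0")
  case True then show ?thesis by (simp add: A_def)
next
  case False
  then have "1 \<le> 2 * real k" by simp
  then have "4^k / (2 * real k) \<le> 4^k / 1"
    by (intro divide_left_mono) auto
  then show ?thesis unfolding A_def by simp
qed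

lemma geo_summ: "\<bar>x::real\<bar> < 1/4 \<Longrightarrow> summable (\<lambda>k. \<bar>4*x\<bar>^k)"
  by (intro summable_geometric) (simp add: abs_mult)

lemma A_series: assumes "\<bar>x::real\<bar> < 1/4"
  shows "(\<lambda>k. A k * x^k) sums (- ln (1 - 4*x) / 2)"
proof -
  have "\<bar>-4*x\<bar> < 1" using assms by simp
  from ln_series'[OF this] have "(\<lambda>n. - ((-(-4*x))^n) / real n) sums ln (1 + -4*x)" .
  from sums_mult[OF this, of "-1/2"]
  have "(\<lambda>n. -1/2 * (- ((-(-4*x))^n) / real n)) sums (-1/2 * ln (1 + -4*x))" .
  moreover have "(\<lambda>n. -1/2 * (- ((-(-4*x))^n) / real n)) = (\<lambda>k. A k * x^k)"
    by (rule ext) (simp add: A_def power_mult_distrib)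
  moreover have "-1/2 * ln (1 + -4*x) = - ln (1 - 4*x) / 2" by simp
  ultimately show ?thesis by simp
qed

lemma B_series: assumes "\<bar>x::real\<bar> < 1/4"
  shows "(\<lambda>k. B k * x^k) sums (1 / sqrt (1 - 4*x))"
proof -
  have "\<bar>-4*x\<bar> < 1" using assms by simp
  from gen_binomial_real[OF this, of "-1/2"]
  have "(\<lambda>n. (-1/2 gchoose n) * (-4*x)^n) sums (1 + -4*x) powr (-1/2)" .
  moreover have "(\<lambda>n. (-1/2 gchoose n) * (-4*x)^n) = (\<lambda>k. B k * x^k)"
  proof
    fix n
    have "(-4*x)^n = (-4)^n * x^n" by (rule power_mult_distrib)
    then show "(-1/2 gchoose n) * (-4*x)^n = B n * x^n" by (simp only: B_def cb_gchoose mult.assoc)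
  qed
  moreover have "(1 + -4*x) powr (-1/2) = 1 / sqrt (1 - 4*x)"
  proof -
    have "0 \<le> 1 - 4*x" using assms by simp
    then have "(1 - 4*x) powr (-(1/2)) = inverse (sqrt (1 - 4*x))"
      by (simp only: powr_minus powr_half_sqrt)
    moreover have "(-1/2::real) = -(1/2)" by simp
    moreover have "1 + -4*x = 1 - 4*x" by simp
    ultimately show ?thesis by (simp only: inverse_eq_divide)
  qed
  ultimately show ?thesis by (simp only:)
qed

lemma F_sums: assumes "\<bar>x::real\<bar> < 1/4"
  shows "(\<lambda>n. cc n * x^n) sums (- ln (1 - 4*x) / (2 * sqrt (1 - 4*x)))"
proof -
  have sa: "summable (\<lambda>k. norm (A k * x^k))"
    by (rule summable_comparison_test'[OF geo_summ[OF assms], of 0])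
       (auto simp: abs_mult power_abs A_nonneg power_mult_distrib intro!: mult_right_mono A_le)
  have sb: "summable (\<lambda>k. norm (B k * x^k))"
    by (rule summable_comparison_test'[OF geo_summ[OF assms], of 0])
       (auto simp: abs_mult power_abs B_nonneg power_mult_distrib intro!: mult_right_mono B_le)
  from Cauchy_product_sums[OF sa sb]
  have "(\<lambda>k. \<Sum>i\<le>k. A i * x^i * (B (k - i) * x^(k - i))) sums ((\<Sum>k. A k * x^k) * (\<Sum>k. B k * x^k))" .
  moreover have "(\<lambda>k. \<Sum>i\<le>k. A i * x^i * (B (k - i) * x^(k - i))) = (\<lambda>n. cc n * x^n)"
  proof
    fix k
    have "(\<Sum>i\<le>k. A i * x^i * (B (k - i) * x^(k - i))) = (\<Sum>i\<le>k. A i * B (k - i) * x^k)"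
    proof (rule sum.cong[OF refl])
      fix i assume "i \<in> {..k}"
      then have "x^i * x^(k-i) = x^k" by (simp add: power_add[symmetric])
      then show "A i * x^i * (B (k - i) * x^(k - i)) = A i * B (k - i) * x^k"
        by (metis mult.assoc mult.left_commute)
    qed
    also have "\<dots> = cc k * x^k" by (simp add: cc_dd dd_def sum_distrib_right)
    finally show "(\<Sum>i\<le>k. A i * x^i * (B (k - i) * x^(k - i))) = cc k * x^k" .
  qed
  moreover have "(\<Sum>k. A k * x^k) * (\<Sum>k. B k * x^k) = - ln (1 - 4*x) / (2 * sqrt (1 - 4*x))"
    using A_series[OF assms] B_series[OF assms] by (simp add: sums_iff)
  ultimately show ?thesis by simp
qed



lemma gA_s5: "sqrt 5 = 2 * goldenA - 1" unfolding goldenA_def by (simp add: field_simps)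
lemma gA_sq: "goldenA^2 = goldenA + 1"
proof -
  have s: "sqrt 5 * sqrt 5 = (5::real)" by simp
  have "(4::real) * goldenA^2 = (2*goldenA)*(2*goldenA)" by (simp add: power2_eq_square)
  also have "\<dots> = (1 + sqrt 5) * (1 + sqrt 5)"
  proof -
    have h: "2*goldenA = 1 + sqrt 5" unfolding goldenA_def by simp
    show ?thesis by (simp only: h)
  qed
  also have "\<dots> = 1 + 2 * sqrt 5 + sqrt 5 * sqrt 5" by (simp add: algebra_simps)
  also have "\<dots> = 4 * (goldenA + 1)" unfolding s goldenA_def by simp
  finally show ?thesis by simp
qed
lemma gA_gt1: "1 < goldenA"
proof -
  have "1 < sqrt (5::real)" by simp
  then show ?thesis unfolding goldenA_def by simp
qed
lemma gA_lt2: "goldenA < 2"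
proof -
  have "sqrt (5::real) < 3" by (rule real_less_lsqrt) auto
  then show ?thesis unfolding goldenA_def by simp
qed
lemma d_nz: "2 * goldenA - 1 \<noteq> 0" using gA_gt1 by simp

definition bp :: "real \<Rightarrow> real \<Rightarrow> real" where "bp a b = (b - a + a * goldenA) / (2 * goldenA - 1)"
definition bq :: "real \<Rightarrow> real \<Rightarrow> real" where "bq a b = (a * goldenA - b) / (2 * goldenA - 1)"

lemma bpq0: "bp a b + bq a b = a"
proof -
  have "bp a b + bq a b = ((b - a + a * goldenA) + (a * goldenA - b)) / (2 * goldenA - 1)"
    unfolding bp_def bq_def by (simp only: add_divide_distrib)
  also have "(b - a + a * goldenA) + (a * goldenA - b) = a * (2 * goldenA - 1)" by (simp add: algebra_simps)
  finally show ?thesis using d_nz by simp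
qed

lemma hp: "(2 * goldenA - 1) * bp a b = b - a + a * goldenA" unfolding bp_def using d_nz by simp
lemma hq: "(2 * goldenA - 1) * bq a b = a * goldenA - b" unfolding bq_def using d_nz by simp

lemma bpq1: "bp a b * goldenA + bq a b * (1 - goldenA) = b"
proof -
  have "(2 * goldenA - 1) * (bp a b * goldenA + bq a b * (1 - goldenA)) = (2 * goldenA - 1) * b"
    using hp[of a b] hq[of a b] by algebra
  then show ?thesis using d_nz by simp
qed

lemma bpqm1: "bp a b * (goldenA - 1) + bq a b * (- goldenA) = b - a"
proof -
  have "(2 * goldenA - 1) * (bp a b * (goldenA - 1) + bq a b * (- goldenA)) = (2 * goldenA - 1) * (b - a)"
    using hp[of a b] hq[of a b] by algebra
  then show ?thesis using d_nz by simp
qed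

lemma pow_rec1: assumes "(x::real)*x = x + 1" shows "x^Suc(Suc n) = x^Suc n + x^n"
proof -
  have "x^Suc(Suc n) = (x*x)*x^n" by (simp only: power_Suc mult.assoc)
  also have "\<dots> = (x+1)*x^n" by (simp only: assms)
  also have "\<dots> = x^Suc n + x^n" by (simp add: distrib_right)
  finally show ?thesis .
qed

lemma pow_rec2: assumes "(x::real)*x = 1 - x" shows "x^Suc(Suc n) = x^n - x^Suc n"
proof -
  have "x^Suc(Suc n) = (x*x)*x^n" by (simp only: power_Suc mult.assoc)
  also have "\<dots> = (1 - x)*x^n" by (simp only: assms)
  also have "\<dots> = x^n - x^Suc n" by (simp add: left_diff_distrib)
  finally show ?thesis .
qed

lemma gA_sq': "goldenA * goldenA = goldenA + 1" using gA_sq by (simp add: power2_eq_square)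

lemma binet_nat: "gib_nat a b n = bp a b * goldenA^n + bq a b * (1 - goldenA)^n"
proof (induction a b n rule: gib_nat.induct)
  case (1 a b)
  show ?case using bpq0 by simp
next
  case (2 a b)
  show ?case using bpq1 by simp
next
  case (3 a b n)
  have e1: "goldenA ^ Suc (Suc n) = goldenA ^ Suc n + goldenA ^ n"
    by (rule pow_rec1) (rule gA_sq')
  have e2: "(1 - goldenA) ^ Suc (Suc n) = (1 - goldenA) ^ Suc n + (1 - goldenA) ^ n"
    by (rule pow_rec1) (use gA_sq' in \<open>simp add: algebra_simps\<close>)
  have "gib_nat a b (Suc (Suc n)) = gib_nat a b (Suc n) + gib_nat a b n" by simp
  also have "\<dots> = bp a b * (goldenA ^ Suc n + goldenA ^ n) + bq a b * ((1 - goldenA) ^ Suc n + (1 - goldenA) ^ n)"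
    unfolding 3 by (simp add: algebra_simps)
  finally show ?case unfolding e1 e2 .
qed

lemma binet_neg: "gib_neg a b n = bp a b * (goldenA - 1)^n + bq a b * (- goldenA)^n"
proof (induction a b n rule: gib_neg.induct)
  case (1 a b)
  show ?case using bpq0 by simp
next
  case (2 a b)
  show ?case using bpqm1 by simp
next
  case (3 a b n)
  have e1: "(goldenA - 1) ^ Suc (Suc n) = (goldenA - 1) ^ n - (goldenA - 1) ^ Suc n"
    by (rule pow_rec2) (use gA_sq' in \<open>simp add: algebra_simps\<close>)
  have e2: "(- goldenA) ^ Suc (Suc n) = (- goldenA) ^ n - (- goldenA) ^ Suc n"
    by (rule pow_rec2) (use gA_sq' in \<open>simp add: algebra_simps\<close>)
  have "gib_neg a b (Suc (Suc n)) = gib_neg a b n - gib_neg a b (Suc n)" by simp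
  also have "\<dots> = bp a b * ((goldenA - 1) ^ n - (goldenA - 1) ^ Suc n) + bq a b * ((- goldenA) ^ n - (- goldenA) ^ Suc n)"
    unfolding 3 by (simp add: algebra_simps)
  finally show ?case unfolding e1 e2 .
qed

lemma inv_gA: "inverse goldenA = goldenA - 1"
proof -
  have "goldenA * (goldenA - 1) = 1" using gA_sq by (simp add: power2_eq_square algebra_simps)
  then show ?thesis by (simp add: inverse_unique)
qed
lemma inv_gB: "inverse (1 - goldenA) = - goldenA"
proof -
  have "(1 - goldenA) * (- goldenA) = 1" using gA_sq by (simp add: power2_eq_square algebra_simps)
  then show ?thesis by (simp add: inverse_unique)
qed

lemma binet: "gib a b t = bp a b * goldenA powi t + bq a b * (1 - goldenA) powi t"
proof (cases "t \<ge> 0")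
  case True
  then obtain n where t: "t = int n" by (metis nonneg_eq_int)
  show ?thesis unfolding gib_def t by (simp add: binet_nat)
next
  case False
  define n where "n = nat (- t)"
  have t: "t = - int n" and n: "n > 0" using False unfolding n_def by auto
  have "goldenA powi t = (goldenA - 1)^n"
    unfolding t power_int_minus power_int_of_nat by (simp add: power_inverse[symmetric] inv_gA)
  moreover have "(1 - goldenA) powi t = (- goldenA)^n"
    unfolding t power_int_minus power_int_of_nat by (simp add: power_inverse[symmetric] inv_gB)
  ultimately show ?thesis unfolding gib_def t using n by (simp add: binet_neg)
qed



definition Fv :: "real \<Rightarrow> real" where "Fv x = - ln (1 - 4*x) / (2 * sqrt (1 - 4*x))"

lemma cc0: "cc 0 = 0" unfolding cc_def oddH_def by simp

lemma F_shift: "\<bar>x::real\<bar> < 1/4 \<Longrightarrow> (\<lambda>m. cc (Suc m) * x^Suc m) sums Fv x"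
  using F_sums[of x] sums_Suc_iff[of "\<lambda>n. cc n * x^n" "Fv x"] unfolding Fv_def by (simp add: cc0)

lemma term_id: "(-1)^m * c / 8^Suc m * y^Suc m = - (c * (-y/8)^Suc m)" for c y :: real
proof -
  have e: "(-y/8) = (-1)*(y/8)" by simp
  have "(-y/8)^Suc m = (-1)^Suc m * (y^Suc m / 8^Suc m)"
    unfolding e power_mult_distrib power_divide ..
  then show ?thesis by (simp only:) (simp add: field_simps)
qed

lemma gen_dist: "(C::real) * (P*(Y1*U) + Q*(Y2*V)) = P*U*(C*Y1) + Q*V*(C*Y2)"
  by (simp add: algebra_simps)

lemma neg_lin: "(P::real) * (- X) + Q * (- Y) = - P * X - Q * Y" by simp

lemma gA_pos: "0 < goldenA" using gA_gt1 by simp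

lemma term_eq: "cterm (Suc m) * gib a b (int (Suc m) + t) =
   - (bp a b * goldenA powi t) * (cc (Suc m) * (- goldenA / 8)^Suc m)
   - (bq a b * (1 - goldenA) powi t) * (cc (Suc m) * (- (1 - goldenA) / 8)^Suc m)"
proof -
  have nz1: "goldenA \<noteq> 0" using gA_pos by simp
  have nz2: "1 - goldenA \<noteq> 0" using gA_gt1 by simp
  have ct: "cterm (Suc m) = (-1)^m * cc (Suc m) / 8^Suc m"
    unfolding cterm_def cc_def B_def by simp
  have p1: "goldenA powi (int (Suc m) + t) = goldenA^Suc m * goldenA powi t"
    using nz1 by (simp add: power_int_add)
  have p2: "(1 - goldenA) powi (int (Suc m) + t) = (1 - goldenA)^Suc m * (1 - goldenA) powi t"
    using nz2 by (simp add: power_int_add)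
  have "cterm (Suc m) * gib a b (int (Suc m) + t) =
     bp a b * goldenA powi t * ((-1)^m * cc (Suc m) / 8^Suc m * goldenA^Suc m)
     + bq a b * (1 - goldenA) powi t * ((-1)^m * cc (Suc m) / 8^Suc m * (1 - goldenA)^Suc m)"
    unfolding ct binet p1 p2 by (rule gen_dist)
  also have "\<dots> = bp a b * goldenA powi t * (- (cc (Suc m) * (- goldenA / 8)^Suc m))
     + bq a b * (1 - goldenA) powi t * (- (cc (Suc m) * (- (1 - goldenA) / 8)^Suc m))"
    by (simp only: term_id)
  also have "\<dots> = - (bp a b * goldenA powi t) * (cc (Suc m) * (- goldenA / 8)^Suc m)
   - (bq a b * (1 - goldenA) powi t) * (cc (Suc m) * (- (1 - goldenA) / 8)^Suc m)"
    by (rule neg_lin)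
  finally show ?thesis .
qed

definition KK :: real where "KK = sqrt 2 / (2 * sqrt (goldenA + 2))"

lemma Fv1: "Fv (- goldenA / 8) = - (ln goldenA + ln (sqrt 5 / 2)) * KK"
proof -
  have e: "1 - 4 * (- goldenA / 8) = goldenA * (sqrt 5 / 2)"
    unfolding gA_s5 using gA_sq' by (simp add: algebra_simps)
  have e2: "1 - 4 * (- goldenA / 8) = (goldenA + 2) / 2" by simp
  have l: "ln (1 - 4 * (- goldenA / 8)) = ln goldenA + ln (sqrt 5 / 2)"
    unfolding e by (rule ln_mult_pos) (use gA_pos in auto)
  have s: "sqrt (1 - 4 * (- goldenA / 8)) = sqrt (goldenA + 2) / sqrt 2"
    unfolding e2 by (simp add: real_sqrt_divide)
  have pos: "0 < sqrt (goldenA + 2)" using gA_pos by simp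
  show ?thesis unfolding Fv_def l s KK_def using pos by (simp add: field_simps)
qed

lemma Fv2: "Fv (- (1 - goldenA) / 8) = - (ln (sqrt 5 / 2) - ln goldenA) * KK * goldenA"
proof -
  have e: "1 - 4 * (- (1 - goldenA) / 8) = (sqrt 5 / 2) / goldenA"
    unfolding gA_s5 using gA_sq' gA_pos by (simp add: field_simps)
  have e2: "1 - 4 * (- (1 - goldenA) / 8) = (goldenA + 2) / (2 * goldenA^2)"
    using gA_sq' gA_pos by (simp add: field_simps power2_eq_square)
  have l: "ln (1 - 4 * (- (1 - goldenA) / 8)) = ln (sqrt 5 / 2) - ln goldenA"
    unfolding e by (rule ln_divide_pos) (use gA_pos in auto)
  have s: "sqrt (1 - 4 * (- (1 - goldenA) / 8)) = sqrt (goldenA + 2) / (sqrt 2 * goldenA)"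
    unfolding e2 using gA_pos by (simp add: real_sqrt_divide real_sqrt_mult)
  have pos: "0 < sqrt (goldenA + 2)" using gA_pos by simp
  show ?thesis unfolding Fv_def l s KK_def using pos gA_pos by (simp add: field_simps)
qed

lemma val_gen: "- (P::real) * (- (Z + L) * K) - Q * (- (L - Z) * K * g) = K * ((P + Q * g) * L + (P - Q * g) * Z)"
  by (simp add: algebra_simps)

lemma main_sum: "(\<lambda>m. cterm (Suc m) * gib a b (int (Suc m) + t)) sums
   (KK * ((bp a b * goldenA powi t + bq a b * (1 - goldenA) powi t * goldenA) * ln (sqrt 5 / 2)
        + (bp a b * goldenA powi t - bq a b * (1 - goldenA) powi t * goldenA) * ln goldenA))"
proof -
  have x1: "\<bar>- goldenA / 8\<bar> < 1/4" using gA_pos gA_lt2 by simp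
  have x2: "\<bar>- (1 - goldenA) / 8\<bar> < 1/4" using gA_gt1 gA_lt2 by simp
  let ?u = "goldenA powi t" and ?v = "(1 - goldenA) powi t"
  have s1: "(\<lambda>m. - (bp a b * ?u) * (cc (Suc m) * (- goldenA / 8)^Suc m)) sums (- (bp a b * ?u) * Fv (- goldenA / 8))"
    by (rule sums_mult[OF F_shift[OF x1]])
  have s2: "(\<lambda>m. (bq a b * ?v) * (cc (Suc m) * (- (1 - goldenA) / 8)^Suc m)) sums ((bq a b * ?v) * Fv (- (1 - goldenA) / 8))"
    by (rule sums_mult[OF F_shift[OF x2]])
  have val: "- (bp a b * ?u) * Fv (- goldenA / 8) - (bq a b * ?v) * Fv (- (1 - goldenA) / 8) =
   KK * ((bp a b * ?u + bq a b * ?v * goldenA) * ln (sqrt 5 / 2)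
        + (bp a b * ?u - bq a b * ?v * goldenA) * ln goldenA)"
    unfolding Fv1 Fv2 by (rule val_gen)
  show ?thesis unfolding term_eq val[symmetric] by (rule sums_diff[OF s1 s2])
qed


lemma powi_sub: "(x::real) \<noteq> 0 \<Longrightarrow> x powi (t - int k) = x powi t * inverse x ^ k"
proof -
  assume x: "x \<noteq> 0"
  have "x powi (t - int k) = x powi (t + (- int k))" by simp
  also have "\<dots> = x powi t * x powi (- int k)" by (rule power_int_add) (simp add: x)
  also have "x powi (- int k) = inverse x ^ k" by (simp add: power_int_minus power_inverse)
  finally show ?thesis .
qed

lemma s5_nz: "sqrt (5::real) \<noteq> 0" by simp

lemma gA_nz: "goldenA \<noteq> 0" using gA_pos by simp
lemma gB_nz: "1 - goldenA \<noteq> 0" using gA_gt1 by simp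

lemma shA1: "goldenA powi (t - 1) = goldenA powi t * (goldenA - 1)"
  using powi_sub[OF gA_nz, of t 1] by (simp add: inv_gA)
lemma shA2: "goldenA powi (t - 2) = goldenA powi t * (goldenA - 1)^2"
  using powi_sub[OF gA_nz, of t 2] by (simp add: inv_gA)
lemma shA3: "goldenA powi (t - 3) = goldenA powi t * (goldenA - 1)^3"
  using powi_sub[OF gA_nz, of t 3] by (simp add: inv_gA)
lemma shB1: "(1 - goldenA) powi (t - 1) = (1 - goldenA) powi t * (- goldenA)"
  using powi_sub[OF gB_nz, of t 1] by (simp add: inv_gB)
lemma shB2: "(1 - goldenA) powi (t - 2) = (1 - goldenA) powi t * (- goldenA)^2"
  using powi_sub[OF gB_nz, of t 2] by (simp add: inv_gB)
lemma shAp1: "goldenA powi (t + 1) = goldenA powi t * goldenA"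
  using gA_nz by (simp add: power_int_add)

lemma const_eq: "sqrt 10 / (10 * sqrt (goldenA + 2)) = KK / sqrt 5"
proof -
  have q: "sqrt (goldenA + 2) \<noteq> 0" using gA_pos by simp
  have "sqrt 10 = sqrt 2 * sqrt (5::real)" by (simp add: real_sqrt_mult[symmetric])
  then show ?thesis unfolding KK_def using q by (simp add: field_simps)
qed

lemma fin_gen: "(s::real) \<noteq> 0 \<Longrightarrow> X = s * c1 \<Longrightarrow> Y = s * c2 \<Longrightarrow> K * (c1 * l + c2 * la) = K / s * (X * l + Y * la)"
  by (simp add: field_simps)

lemma coefX: "(g::real) * g = g + 1 \<Longrightarrow> (2*g - 1) * p = b - a + a * g \<Longrightarrow> (2*g - 1) * q = a * g - b \<Longrightarrow>
  u * (g - 1)^3 * (b * g + a) + (p * u + q * v) + (p * (u * (g - 1)^2) + q * (v * (- g)^2)) = (2*g - 1) * (p * u + q * v * g)"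
  by algebra

lemma coefY: "(g::real) * g = g + 1 \<Longrightarrow> (2*g - 1) * p = b - a + a * g \<Longrightarrow> (2*g - 1) * q = a * g - b \<Longrightarrow>
  u * (b * g + a) - (p * u + q * v) - (p * (u * (g - 1)^2) + q * (v * (- g)^2)) = (2*g - 1) * (p * u - q * v * g)"
  by algebra


lemma bp21: "bp 2 1 = 1" unfolding bp_def using d_nz by simp
lemma bq21: "bq 2 1 = 1" unfolding bq_def using d_nz by (simp add: mult.commute)
lemma hp01: "(2 * goldenA - 1) * bp 0 1 = 1" using hp[of 0 1] by simp
lemma hq01: "(2 * goldenA - 1) * bq 0 1 = -1" using hq[of 0 1] by simp

lemma luc_shift: "gib 2 1 (t - 1) = goldenA powi t * (goldenA - 1) + (1 - goldenA) powi t * (- goldenA)"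
  unfolding binet bp21 bq21 shA1 shB1 by simp

lemma coefF1: "(g::real) * g = g + 1 \<Longrightarrow> (2*g - 1) * p = 1 \<Longrightarrow> (2*g - 1) * q = -1 \<Longrightarrow>
  u * (g - 1)^2 + (u * (g - 1) + v * (- g)) = (2*g - 1) * (p * u + q * v * g)"
  by algebra

lemma coefF2: "(g::real) * g = g + 1 \<Longrightarrow> (2*g - 1) * p = 1 \<Longrightarrow> (2*g - 1) * q = -1 \<Longrightarrow>
  u * g - (u * (g - 1) + v * (- g)) = (2*g - 1) * (p * u - q * v * g)"
  by algebra

theorem theorem13:
  shows "(\<forall>t::int. (\<lambda>m. cterm (Suc m) * lucZ (int (Suc m) + t)) sums
            (sqrt 2 / (2 * sqrt (goldenA + 2)) *
              ((goldenA powi (t + 1) - lucZ (t - 1)) * ln (sqrt 5 / 2)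
               + (goldenA powi (t - 2) + lucZ (t - 1)) * ln goldenA)))
    \<and> (\<forall>t::int. (\<lambda>m. cterm (Suc m) * fibZ (int (Suc m) + t)) sums
            (sqrt 10 / (10 * sqrt (goldenA + 2)) *
              ((goldenA powi (t - 2) + lucZ (t - 1)) * ln (sqrt 5 / 2)
               + (goldenA powi (t + 1) - lucZ (t - 1)) * ln goldenA)))
    \<and> (\<forall>(a::real) (b::real) (t::int). (a \<noteq> 0 \<or> b \<noteq> 0) \<longrightarrow>
          (\<lambda>m. cterm (Suc m) * gib a b (int (Suc m) + t)) sums
            (sqrt 10 / (10 * sqrt (goldenA + 2)) *
              ((goldenA powi (t - 3) * (b * goldenA + a) + gib a b t + gib a b (t - 2)) * ln (sqrt 5 / 2)
               + (goldenA powi t * (b * goldenA + a) - gib a b t - gib a b (t - 2)) * ln goldenA)))"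
proof (intro conjI allI impI)
  fix t :: int
  let ?u = "goldenA powi t" and ?v = "(1 - goldenA) powi t"
  have m: "(\<lambda>m. cterm (Suc m) * gib 2 1 (int (Suc m) + t)) sums
   (KK * ((bp 2 1 * ?u + bq 2 1 * ?v * goldenA) * ln (sqrt 5 / 2)
        + (bp 2 1 * ?u - bq 2 1 * ?v * goldenA) * ln goldenA))" by (rule main_sum)
  have e1: "bp 2 1 * ?u + bq 2 1 * ?v * goldenA = goldenA powi (t + 1) - gib 2 1 (t - 1)"
    unfolding bp21 bq21 luc_shift shAp1 by (simp add: algebra_simps)
  have e2: "bp 2 1 * ?u - bq 2 1 * ?v * goldenA = goldenA powi (t - 2) + gib 2 1 (t - 1)"
  proof -
    have "(goldenA - 1)^2 + (goldenA - 1) = 1" using gA_sq' by (simp add: power2_eq_square algebra_simps)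
    then have "?u * (goldenA - 1)^2 + ?u * (goldenA - 1) = ?u" by (metis distrib_left mult.right_neutral)
    then show ?thesis unfolding bp21 bq21 luc_shift shA2 by (simp add: algebra_simps)
  qed
  show "(\<lambda>m. cterm (Suc m) * lucZ (int (Suc m) + t)) sums
            (sqrt 2 / (2 * sqrt (goldenA + 2)) *
              ((goldenA powi (t + 1) - lucZ (t - 1)) * ln (sqrt 5 / 2)
               + (goldenA powi (t - 2) + lucZ (t - 1)) * ln goldenA))"
    using m unfolding lucZ_def e1 e2 KK_def .
next
  fix t :: int
  let ?u = "goldenA powi t" and ?v = "(1 - goldenA) powi t"
  have m: "(\<lambda>m. cterm (Suc m) * gib 0 1 (int (Suc m) + t)) sums
   (KK * ((bp 0 1 * ?u + bq 0 1 * ?v * goldenA) * ln (sqrt 5 / 2)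
        + (bp 0 1 * ?u - bq 0 1 * ?v * goldenA) * ln goldenA))" by (rule main_sum)
  have x1: "goldenA powi (t - 2) + gib 2 1 (t - 1) = sqrt 5 * (bp 0 1 * ?u + bq 0 1 * ?v * goldenA)"
    unfolding luc_shift shA2 gA_s5 by (rule coefF1[OF gA_sq' hp01 hq01])
  have x2: "goldenA powi (t + 1) - gib 2 1 (t - 1) = sqrt 5 * (bp 0 1 * ?u - bq 0 1 * ?v * goldenA)"
    unfolding luc_shift shAp1 gA_s5 by (rule coefF2[OF gA_sq' hp01 hq01])
  have eq: "KK * ((bp 0 1 * ?u + bq 0 1 * ?v * goldenA) * ln (sqrt 5 / 2)
        + (bp 0 1 * ?u - bq 0 1 * ?v * goldenA) * ln goldenA) =
     sqrt 10 / (10 * sqrt (goldenA + 2)) *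
              ((goldenA powi (t - 2) + gib 2 1 (t - 1)) * ln (sqrt 5 / 2)
               + (goldenA powi (t + 1) - gib 2 1 (t - 1)) * ln goldenA)"
    unfolding const_eq by (rule fin_gen[OF s5_nz x1 x2])
  show "(\<lambda>m. cterm (Suc m) * fibZ (int (Suc m) + t)) sums
            (sqrt 10 / (10 * sqrt (goldenA + 2)) *
              ((goldenA powi (t - 2) + lucZ (t - 1)) * ln (sqrt 5 / 2)
               + (goldenA powi (t + 1) - lucZ (t - 1)) * ln goldenA))"
    using m unfolding fibZ_def lucZ_def eq .
next
  fix a b :: real and t :: int
  let ?u = "goldenA powi t" and ?v = "(1 - goldenA) powi t"
  have m: "(\<lambda>m. cterm (Suc m) * gib a b (int (Suc m) + t)) sums
   (KK * ((bp a b * ?u + bq a b * ?v * goldenA) * ln (sqrt 5 / 2)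
        + (bp a b * ?u - bq a b * ?v * goldenA) * ln goldenA))" by (rule main_sum)
  have x1: "goldenA powi (t - 3) * (b * goldenA + a) + gib a b t + gib a b (t - 2) = sqrt 5 * (bp a b * ?u + bq a b * ?v * goldenA)"
    unfolding binet[of a b "t - 2"] shA2 shB2 shA3 gA_s5 binet[of a b t] by (rule coefX[OF gA_sq' hp hq])
  have x2: "goldenA powi t * (b * goldenA + a) - gib a b t - gib a b (t - 2) = sqrt 5 * (bp a b * ?u - bq a b * ?v * goldenA)"
    unfolding binet[of a b "t - 2"] shA2 shB2 gA_s5 binet[of a b t] by (rule coefY[OF gA_sq' hp hq])
  have eq: "KK * ((bp a b * ?u + bq a b * ?v * goldenA) * ln (sqrt 5 / 2)
        + (bp a b * ?u - bq a b * ?v * goldenA) * ln goldenA) =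
     sqrt 10 / (10 * sqrt (goldenA + 2)) *
              ((goldenA powi (t - 3) * (b * goldenA + a) + gib a b t + gib a b (t - 2)) * ln (sqrt 5 / 2)
               + (goldenA powi t * (b * goldenA + a) - gib a b t - gib a b (t - 2)) * ln goldenA)"
    unfolding const_eq by (rule fin_gen[OF s5_nz x1 x2])
  show "(\<lambda>m. cterm (Suc m) * gib a b (int (Suc m) + t)) sums
            (sqrt 10 / (10 * sqrt (goldenA + 2)) *
              ((goldenA powi (t - 3) * (b * goldenA + a) + gib a b t + gib a b (t - 2)) * ln (sqrt 5 / 2)
               + (goldenA powi t * (b * goldenA + a) - gib a b t - gib a b (t - 2)) * ln goldenA))"
    using m unfolding eq .
qed

end
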